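(* Let $n\ge2$ and let $\mathsf r=[r_1,\dots,r_{2n-2}]$ be a tree-like factorization of $\lambda_n$, written as $r_\ell=(\!(a_{\ell-1},a_\ell)\!)$ with integers $a_0<a_1<\dots<a_{2n-2}$. Let $k\in\{1,\dots,n-1\}$. Then: (i) if $r_\ell$ occurs strictly before $r^k_1$ or strictly after $r^k_2$ in the sequence, then $a_{\ell-1}\not\equiv k$ and $a_\ell\not\equiv k\pmod n$; (ii) if $r_\ell$ occurs strictly between $r^k_1$ and $r^k_2$, then $a_{\ell-1}\not\equiv \beta_k$ and $a_\ell\not\equiv\beta_k\pmod n$; (iii) $r_\ell=(\!(a_{\ell-1},a_\ell)\!)$ occurs strictly between $r^k_1$ and $r^k_2$ if and only if the reflection $(\!(a_\ell-n,a_{\ell-1})\!)$ also occurs in $\mathsf r$ strictly between $r^k_1$ and $r^k_2$.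
   Context: The affine symmetric group $\widetilde S_n$ is the group, under composition $(vw)(k)=v(w(k))$, of bijections $w:\mathbb Z\to\mathbb Z$ with $w(i+n)=w(i)+n$ and $\sum_{i=1}^n w(i)=\binom{n+1}{2}$. For $i\not\equiv j\pmod n$, $(\!(i,j)\!)$ is the affine reflection interchanging $i+kn$ and $j+kn$ for all $k\in\mathbb Z$; $(\!(i,j)\!)=(\!(j,i)\!)=(\!(i+kn,j+kn)\!)$. Let $\lambda_n$ be the element with $\lambda_n(k)=k+n$ for $k\not\equiv0\pmod n$ and $\lambda_n(k)=k-n(n-1)$ for $k\equiv 0\pmod n$; its reflection length is $2n-2$. $\textsc{fact}(\lambda_n)$ is the set of sequences $[r_1,\dots,r_{2n-2}]$ of reflections with $r_1\cdots r_{2n-2}=\lambda_n$. Such a sequence is tree-like if one can write $r_k=(\!(a_{k-1},b_k)\!)$ with integers $a_{k-1}<b_k$ ($1\le k\le 2n-2$) and $a_k\equiv b_k\pmod n$ ($1\le k\le 2n-3$); equivalently there are integers $a_0<\dots<a_{2n-2}$ with $r_\ell=(\!(a_{\ell-1},a_\ell)\!)$. A reflection $r_\ell$ increases an integer $k$ if $r_\ell r_{\ell+1}\cdots r_{2n-2}(k)>r_{\ell+1}\cdots r_{2n-2}(k)$. For a tree-like $\mathsf r$ and $k\in\{1,\dots,n-1\}$, exactly two reflections of $\mathsf r$ increase $k$; $r^k_1$ denotes the earlier and $r^k_2$ the later of these two in the sequence. Each of them has exactly one endpoint congruent to $k$ modulo $n$, and the other endpoints of $r^k_1$ and $r^k_2$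 are congruent to each other modulo $n$; $\beta_k$ denotes this common residue class modulo $n$. *)

theory Defs
  imports Main
begin

definition affine_perm :: "nat \<Rightarrow> (int \<Rightarrow> int) \<Rightarrow> bool" where
  "affine_perm n w \<longleftrightarrow> bij w \<and> (\<forall>i. w (i + int n) = w i + int n)
     \<and> (\<Sum>i=1..int n. w i) = int n * (int n + 1) div 2"

text \<open>The affine reflection ((i,j)) interchanging i + k n and j + k n for all k
  (meaningful for i, j not congruent mod n).\<close>
definition aff_refl :: "nat \<Rightarrow> int \<Rightarrow> int \<Rightarrow> int \<Rightarrow> int" where
  "aff_refl n i j = (\<lambda>x. if x mod int n = i mod int n then x - i + j
                        else if x mod int n = j mod int n then x - j + i
                        else x)"

definition is_aff_refl :: "nat \<Rightarrow> (int \<Rightarrow> int) \<Rightarrow> bool" where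
  "is_aff_refl n w \<longleftrightarrow> (\<exists>i j. i mod int n \<noteq> j mod int n \<and> w = aff_refl n i j)"

definition lambda_aff :: "nat \<Rightarrow> int \<Rightarrow> int" where
  "lambda_aff n k = (if k mod int n = 0 then k - int n * (int n - 1) else k + int n)"

definition seq_prod :: "(int \<Rightarrow> int) list \<Rightarrow> int \<Rightarrow> int" where
  "seq_prod rs = foldr (\<circ>) rs id"

text \<open>fact(lambda_n): sequences of 2n-2 reflections with product lambda_n
  (2n-2 being the reflection length of lambda_n).\<close>
definition fact_lambda :: "nat \<Rightarrow> (int \<Rightarrow> int) list set" where
  "fact_lambda n = {rs. length rs = 2 * n - 2 \<and> (\<forall>r \<in> set rs. is_aff_refl n r)
                        \<and> seq_prod rs = lambda_aff n}"

text \<open>Tree-like with witnessing integers a_0 < ... < a_{2n-2}, r_l = ((a_{l-1}, a_l));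
  the sequence is 1-indexed: r_l = rs ! (l - 1).\<close>
definition tree_like_wit :: "nat \<Rightarrow> (int \<Rightarrow> int) list \<Rightarrow> (nat \<Rightarrow> int) \<Rightarrow> bool" where
  "tree_like_wit n rs a \<longleftrightarrow>
     (\<forall>l \<in> {1..length rs}. a (l - 1) < a l \<and> a (l - 1) mod int n \<noteq> a l mod int n
                            \<and> rs ! (l - 1) = aff_refl n (a (l - 1)) (a l))"

definition increases :: "(int \<Rightarrow> int) list \<Rightarrow> nat \<Rightarrow> int \<Rightarrow> bool" where
  "increases rs l k \<longleftrightarrow> (rs ! (l - 1)) (seq_prod (drop l rs) k) > seq_prod (drop l rs) k"

end

theory Submission
  imports Defs
begin


lemma mod_dvd_iff: "(x::int) mod N = y mod N \<longleftrightarrow> N dvd (x - y)"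
  by (rule mod_eq_dvd_iff)

lemma modI: "(N::int) dvd (x - y) \<Longrightarrow> x mod N = y mod N"
  using mod_eq_dvd_iff by blast
lemma modD: "x mod (N::int) = y mod N \<Longrightarrow> N dvd (x - y)"
  using mod_eq_dvd_iff by blast
lemma mod_cong_diff: "(x::int) - y = u - v \<Longrightarrow> u mod N = v mod N \<Longrightarrow> x mod N = y mod N"
  by (metis modD modI)

lemma aff_refl_shift: "aff_refl n (x + t * int n) (y + t * int n) = aff_refl n x y"
  by (rule ext) (simp add: aff_refl_def)

lemma aff_refl_shift2:
  assumes "int n dvd (x' - x)" "y' - x' = y - x"
  shows "aff_refl n x' y' = aff_refl n x y"
proof -
  obtain t where t: "x' - x = int n * t" using assms(1) by (auto simp: dvd_def)
  have "x' = x + t * int n" "y' = y + t * int n" using t assms(2) by (auto simp: algebra_simps)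
  thus ?thesis using aff_refl_shift by simp
qed

lemma aff_refl_periodic: "aff_refl n i j (z + int n) = aff_refl n i j z + int n"
  by (simp add: aff_refl_def)

lemma aff_refl_invol:
  assumes "i mod int n \<noteq> j mod int n"
  shows "aff_refl n i j (aff_refl n i j z) = z"
proof -
  have A: "(z - i + j) mod int n = j mod int n" if "z mod int n = i mod int n"
    using that by (simp add: mod_dvd_iff)
  have B: "(z - j + i) mod int n = i mod int n" if "z mod int n = j mod int n"
    using that by (simp add: mod_dvd_iff)
  show ?thesis using A B assms by (auto simp: aff_refl_def)
qed

lemma aff_refl_moved:
  assumes "aff_refl n i j z \<noteq> z"
  shows "z mod int n = i mod int n \<or> z mod int n = j mod int n"
  using assms by (auto simp: aff_refl_def split: if_splits)

lemma aff_refl_moves: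
  assumes "i mod int n \<noteq> j mod int n" "z mod int n = i mod int n \<or> z mod int n = j mod int n"
  shows "aff_refl n i j z \<noteq> z"
  using assms by (auto simp: aff_refl_def)

lemma aff_refl_res:
  assumes "i mod int n \<noteq> j mod int n" "i' mod int n \<noteq> j' mod int n"
    "aff_refl n i j = aff_refl n i' j'"
  shows "{i mod int n, j mod int n} = {i' mod int n, j' mod int n}"
proof -
  have 1: "z mod int n \<in> {i' mod int n, j' mod int n}" if "z mod int n \<in> {i mod int n, j mod int n}" for z
    using aff_refl_moves[OF assms(1), of z] aff_refl_moved[of n i' j' z] assms(3) that by auto
  have 2: "z mod int n \<in> {i mod int n, j mod int n}" if "z mod int n \<in> {i' mod int n, j' mod int n}" for z
    using aff_refl_moves[OF assms(2), of z] aff_refl_moved[of n i j z] assms(3) that by auto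
  show ?thesis using 1[of i] 1[of j] 2[of i'] 2[of j'] by auto
qed

lemma seq_prod_Cons: "seq_prod (x # xs) = x \<circ> seq_prod xs"
  by (simp add: seq_prod_def)

lemma seq_prod_Nil: "seq_prod [] = id"
  by (simp add: seq_prod_def)

lemma seq_prod_periodic:
  "(\<forall>r\<in>set xs. \<forall>z. r (z + c) = r z + c) \<Longrightarrow> seq_prod xs (z + c) = seq_prod xs z + c"
  by (induction xs arbitrary: z) (auto simp: seq_prod_Cons seq_prod_Nil)

lemma seq_prod_inj:
  "(\<forall>r\<in>set xs. inj r) \<Longrightarrow> inj (seq_prod xs)"
  by (induction xs) (auto simp: seq_prod_Cons seq_prod_Nil inj_compose)

lemma periodic_mult_nat:
  assumes "\<And>z. f (z + c) = f z + (c::int)"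
  shows "f (z + int k * c) = f z + int k * c"
proof (induction k)
  case 0 then show ?case by simp
next
  case (Suc k)
  have "f (z + int (Suc k) * c) = f ((z + int k * c) + c)" by (simp add: algebra_simps)
  also have "\<dots> = f (z + int k * c) + c" by (rule assms)
  also have "\<dots> = f z + int (Suc k) * c" using Suc by (simp add: algebra_simps)
  finally show ?case .
qed

lemma periodic_mult:
  assumes "\<And>z. f (z + c) = f z + (c::int)"
  shows "f (z + t * c) = f z + t * c"
proof (cases "t \<ge> 0")
  case True
  then obtain k where "t = int k" by (intro that[of "nat t"]) simp
  then show ?thesis using periodic_mult_nat[of f c, OF assms] by simp
next
  case False
  then obtain k where k: "t = - int k" by (intro that[of "nat (-t)"]) simp
  have "f z = f ((z + t * c) + int k * c)" using k by simp
  also have "\<dots> = f (z + t * c) + int k * c" by (rule periodic_mult_nat[of f c, OF assms])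
  finally show ?thesis using k by simp
qed



locale TL =
  fixes n :: nat and rs :: "(int \<Rightarrow> int) list" and a :: "nat \<Rightarrow> int"
  assumes n2: "n \<ge> 2" and fl: "rs \<in> fact_lambda n" and tw: "tree_like_wit n rs a"
begin

definition "m = 2 * n - 2"
definition "w j = seq_prod (drop j rs)"
definition "d l = a l - a (l - 1)"

lemma Npos: "int n \<ge> 2" using n2 by simp

lemma len: "length rs = m"
  using fl by (simp add: fact_lambda_def m_def)

lemma mpos: "m \<ge> 2" using n2 by (simp add: m_def)

lemma step:
  assumes "1 \<le> l" "l \<le> m"
  shows "a (l - 1) < a l" "a (l - 1) mod int n \<noteq> a l mod int n"
    "rs ! (l - 1) = aff_refl n (a (l - 1)) (a l)"
  using tw assms len by (auto simp: tree_like_wit_def)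

lemma refl_props:
  assumes "r \<in> set rs"
  shows "\<And>z. r (z + int n) = r z + int n" "inj r"
proof -
  obtain i j where ij: "i mod int n \<noteq> j mod int n" "r = aff_refl n i j"
    using fl assms by (auto simp: fact_lambda_def is_aff_refl_def)
  show "\<And>z. r (z + int n) = r z + int n" using ij aff_refl_periodic by simp
  show "inj r" unfolding ij(2) using aff_refl_invol[OF ij(1)] by (metis injI)
qed

lemma w_periodic: "w j (z + int n) = w j z + int n"
proof -
  have "\<forall>r\<in>set (drop j rs). \<forall>z. r (z + int n) = r z + int n"
    using refl_props(1)[OF in_set_dropD] by simp
  then show ?thesis unfolding w_def by (rule seq_prod_periodic)
qed

lemma w_periodic_mult: "w j (z + t * int n) = w j z + t * int n"
  by (rule periodic_mult) (rule w_periodic)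

lemma w_inj: "inj (w j)"
proof -
  have "\<forall>r\<in>set (drop j rs). inj r"
    using refl_props(2)[OF in_set_dropD] by simp
  then show ?thesis unfolding w_def by (rule seq_prod_inj)
qed

lemma w_m: "w m = id"
  by (simp add: w_def len seq_prod_Nil)

lemma w_0: "w 0 = lambda_aff n"
  using fl by (simp add: w_def fact_lambda_def)

lemma w_step:
  assumes "1 \<le> j" "j \<le> m"
  shows "w (j - 1) = aff_refl n (a (j - 1)) (a j) \<circ> w j"
proof -
  have "drop (j - 1) rs = rs ! (j - 1) # drop j rs"
    using Cons_nth_drop_Suc[of "j - 1" rs] assms len by simp
  thus ?thesis using step(3)[OF assms] by (simp add: w_def seq_prod_Cons)
qed

lemma R1:
  assumes "1 \<le> j" "j \<le> m" "y mod int n = a j mod int n"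
  shows "aff_refl n (a (j - 1)) (a j) y = y - a j + a (j - 1)"
  using step(2)[OF assms(1,2)] assms(3) by (simp add: aff_refl_def)

lemma R2:
  assumes "1 \<le> j" "j \<le> m" "y mod int n = a (j - 1) mod int n"
  shows "aff_refl n (a (j - 1)) (a j) y = y - a (j - 1) + a j"
  using assms(3) by (simp add: aff_refl_def)

lemma R3:
  assumes "y mod int n \<noteq> a (j - 1) mod int n" "y mod int n \<noteq> a j mod int n"
  shows "aff_refl n (a (j - 1)) (a j) y = y"
  using assms by (simp add: aff_refl_def)

lemma a_mono: "i < j \<Longrightarrow> j \<le> m \<Longrightarrow> a i < a j"
proof (induction j)
  case 0 then show ?case by simp
next
  case (Suc j)
  have "a j < a (Suc j)" using step(1)[of "Suc j"] Suc.prems by simp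
  then show ?case using Suc by (cases "i = j") auto
qed

lemma ride:
  assumes "j \<le> m" "w j x mod int n = a j mod int n" "i \<le> j"
  shows "w i x = w j x - a j + a i"
  using assms
proof (induction j)
  case 0 then show ?case by simp
next
  case (Suc j)
  show ?case
  proof (cases "i = Suc j")
    case True then show ?thesis by simp
  next
    case False
    have e: "w j x = w (Suc j) x - a (Suc j) + a j"
      using w_step[of "Suc j"] R1[of "Suc j" "w (Suc j) x"] Suc.prems by simp
    have "w j x mod int n = a j mod int n"
      by (rule mod_cong_diff[OF _ Suc.prems(2)]) (use e in linarith)
    then have "w i x = w j x - a j + a i" using Suc False by simp
    then show ?thesis using e by simp
  qed
qed

lemma am0: "a m mod int n = 0" and a00: "a 0 mod int n = 0"
proof -
  have "w 0 (a m) = a 0" using ride[of m "a m" 0] w_m by simp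
  then have e: "lambda_aff n (a m) = a 0" using w_0 by simp
  have lt: "a 0 < a m" using a_mono[of 0 m] mpos by simp
  show "a m mod int n = 0"
  proof (rule ccontr)
    assume "a m mod int n \<noteq> 0"
    then have "lambda_aff n (a m) = a m + int n" by (simp add: lambda_aff_def)
    then show False using e lt by simp
  qed
  then have "a 0 = a m - int n * (int n - 1)" using e by (simp add: lambda_aff_def)
  moreover have "int n dvd a m" using \<open>a m mod int n = 0\<close> by (simp add: dvd_eq_mod_eq_0)
  ultimately have "int n dvd a 0" by simp
  then show "a 0 mod int n = 0" by (simp add: dvd_eq_mod_eq_0)
qed

lemma lam_mod: "lambda_aff n x mod int n = x mod int n"
  by (rule mod_cong_diff[of _ _ "int n * (if x mod int n = 0 then (1 - int n) else 1)" 0]) (auto simp: lambda_aff_def algebra_simps)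

lemma nocatch:
  assumes "c mod int n \<noteq> 0" "j \<le> m"
  shows "w j c mod int n \<noteq> a j mod int n"
proof
  assume h: "w j c mod int n = a j mod int n"
  have e: "w 0 c = w j c - a j + a 0" using ride[OF assms(2) h, of 0] by simp
  have "w 0 c mod int n = a 0 mod int n" by (rule mod_cong_diff[OF _ h]) (use e in linarith)
  then have "c mod int n = 0" using a00 w_0 lam_mod by simp
  then show False using assms by simp
qed

lemma wN: "j \<le> m \<Longrightarrow> w j (int n) mod int n = a j mod int n"
proof -
  assume j: "j \<le> m"
  have "w m (int n) mod int n = a m mod int n" using w_m am0 by simp
  have e: "w j (int n) = w m (int n) - a m + a j" using ride[of m "int n" j] j \<open>w m (int n) mod int n = a m mod int n\<close> by simp
  show ?thesis by (rule mod_cong_diff[OF _ \<open>w m (int n) mod int n = a m mod int n\<close>]) (use e in linarith)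
qed

lemma traj:
  assumes "c mod int n \<noteq> 0" "1 \<le> l" "l \<le> m"
  shows "w (l - 1) c = (if w l c mod int n = a (l - 1) mod int n then w l c + d l else w l c)"
  using w_step[OF assms(2,3)] R2[OF assms(2,3)] R3[of "w l c" l] nocatch[OF assms(1,3)]
  by (cases "w l c mod int n = a (l - 1) mod int n") (auto simp: d_def)

lemma inc_iff:
  assumes "c mod int n \<noteq> 0" "1 \<le> l" "l \<le> m"
  shows "increases rs l c \<longleftrightarrow> w l c mod int n = a (l - 1) mod int n"
proof -
  have "increases rs l c \<longleftrightarrow> aff_refl n (a (l - 1)) (a l) (w l c) > w l c"
    using step(3)[OF assms(2,3)] by (simp add: increases_def w_def)
  also have "\<dots> \<longleftrightarrow> w l c mod int n = a (l - 1) mod int n"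
    using R2[OF assms(2,3)] R3[of "w l c" l] nocatch[OF assms(1,3)] step(1)[OF assms(2,3)]
    by (cases "w l c mod int n = a (l - 1) mod int n") auto
  finally show ?thesis .
qed

lemma res_inj:
  assumes "c \<in> {1..int n}" "c' \<in> {1..int n}" "w l c mod int n = w l c' mod int n"
  shows "c = c'"
proof -
  obtain t where t: "w l c - w l c' = int n * t" using modD[OF assms(3)] by (auto simp: dvd_def)
  have "w l c = w l (c' + t * int n)" using t w_periodic_mult[of l c' t] by (simp add: algebra_simps)
  then have e: "c = c' + t * int n" using w_inj[of l] by (simp add: inj_def)
  show ?thesis
  proof (rule ccontr)
    assume "c \<noteq> c'"
    then have "t \<noteq> 0" using e by simp
    then have "\<bar>t * int n\<bar> \<ge> int n" using Npos by (simp add: abs_mult)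
    then show False using e assms(1,2) by auto
  qed
qed

end


lemma mod_cong_diffN: "(x::int) - y = u - v + t * N \<Longrightarrow> u mod N = v mod N \<Longrightarrow> x mod N = y mod N"
proof -
  assume e: "x - y = u - v + t * N" and h: "u mod N = v mod N"
  have "N dvd (u - v)" using modD[OF h] .
  then have "N dvd (u - v + t * N)" by simp
  then show ?thesis using e modI by metis
qed

context TL begin

definition "cls = {1..int n - 1}"
definition "J c = {l \<in> {1..m}. increases rs l c}"
definition "S c j = (\<Sum>l \<in> {j<..m}. if increases rs l c then d l else 0)"

lemma cls_mod: "c \<in> cls \<Longrightarrow> c mod int n = c"
  by (simp add: cls_def)

lemma cls_mod0: "c \<in> cls \<Longrightarrow> c mod int n \<noteq> 0"
  using cls_mod by (fastforce simp: cls_def)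

lemma wsum_aux:
  assumes "c mod int n \<noteq> 0"
  shows "i \<le> m \<Longrightarrow> w (m - i) c = c + S c (m - i)"
proof (induction i)
  case 0
  have "{m<..m} = {}" by auto
  then show ?case by (simp add: w_m S_def)
next
  case (Suc i)
  define j where "j = m - i"
  have j1: "1 \<le> j" "j \<le> m" using Suc.prems by (auto simp: j_def)
  have mj: "m - Suc i = j - 1" by (simp add: j_def)
  have IH: "w j c = c + S c j" using Suc by (simp add: j_def)
  have set: "{j - 1<..m} = insert j {j<..m}" using j1 by auto
  have S: "S c (j - 1) = (if increases rs j c then d j else 0) + S c j"
    unfolding S_def set by simp
  show ?case unfolding mj S
    using traj[OF assms j1] inc_iff[OF assms j1] IH by auto
qed

lemma wsum: "c mod int n \<noteq> 0 \<Longrightarrow> j \<le> m \<Longrightarrow> w j c = c + S c j"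
  using wsum_aux[of c "m - j"] by simp

lemma d_pos: "1 \<le> l \<Longrightarrow> l \<le> m \<Longrightarrow> d l > 0"
  using step(1) by (simp add: d_def)

lemma d_mod: "1 \<le> l \<Longrightarrow> l \<le> m \<Longrightarrow> d l mod int n \<noteq> 0"
proof
  assume l: "1 \<le> l" "l \<le> m" and h: "d l mod int n = 0"
  have "a l mod int n = a (l - 1) mod int n"
    by (rule mod_cong_diff[of _ _ "d l" 0]) (use h in \<open>simp_all add: d_def\<close>)
  then show False using step(2)[OF l] by simp
qed

lemma J_sub: "J c \<subseteq> {1..m}" by (auto simp: J_def)
lemma J_fin: "finite (J c)" using J_sub finite_subset by blast

lemma S0: "S c 0 = (\<Sum>l\<in>J c. d l)"
proof -
  have "{0<..m} = {1..m}" by auto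
  moreover have "(\<Sum>l\<in>{1..m}. if increases rs l c then d l else 0) = (\<Sum>l\<in>{l \<in> {1..m}. increases rs l c}. d l)"
    by (rule sum.inter_filter[symmetric]) simp
  ultimately show ?thesis unfolding S_def J_def by simp
qed

lemma total: "c \<in> cls \<Longrightarrow> (\<Sum>l\<in>J c. d l) = int n"
proof -
  assume c: "c \<in> cls"
  have "w 0 c = c + S c 0" using wsum[OF cls_mod0[OF c]] by simp
  moreover have "w 0 c = c + int n" using w_0 cls_mod0[OF c] by (simp add: lambda_aff_def)
  ultimately show ?thesis using S0 by simp
qed

lemma cls_exists:
  assumes l: "1 \<le> l" "l \<le> m"
  shows "\<exists>c\<in>cls. increases rs l c"
proof -
  define f where "f c = w l c mod int n" for c
  have inj: "inj_on f {1..int n}" using res_inj unfolding f_def inj_on_def by blast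
  have sub: "f ` {1..int n} \<subseteq> {0..<int n}" using Npos by (auto simp: f_def)
  have "card (f ` {1..int n}) = card {0..<int n}" using card_image[OF inj] by simp
  then have eq: "f ` {1..int n} = {0..<int n}" using card_subset_eq[OF _ sub] by simp
  have "a (l - 1) mod int n \<in> {0..<int n}" using Npos by simp
  then have "a (l - 1) mod int n \<in> f ` {1..int n}" using eq by simp
  then obtain c where c: "c \<in> {1..int n}" "f c = a (l - 1) mod int n" by (metis imageE)
  have "c \<noteq> int n" using c(2) wN[OF l(2)] step(2)[OF l] by (auto simp: f_def)
  then have cc: "c \<in> cls" using c(1) by (auto simp: cls_def)
  then show ?thesis using inc_iff[OF cls_mod0[OF cc] l] c(2) by (auto simp: f_def)
qed

lemma cls_unique:
  assumes l: "1 \<le> l" "l \<le> m" and c: "c \<in> cls" "c' \<in> cls"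
    and i: "increases rs l c" "increases rs l c'"
  shows "c = c'"
proof -
  have "w l c mod int n = w l c' mod int n"
    using inc_iff[OF cls_mod0[OF c(1)] l] inc_iff[OF cls_mod0[OF c(2)] l] i by simp
  then show ?thesis using res_inj c by (auto simp: cls_def)
qed

lemma card_cls: "card cls = n - 1"
  by (simp add: cls_def)

lemma sum_card: "(\<Sum>c\<in>cls. card (J c)) = m"
proof -
  have U: "(\<Union>c\<in>cls. J c) = {1..m}"
  proof
    show "(\<Union>c\<in>cls. J c) \<subseteq> {1..m}" using J_sub by blast
    show "{1..m} \<subseteq> (\<Union>c\<in>cls. J c)"
    proof
      fix l assume "l \<in> {1..m}"
      then obtain c where "c \<in> cls" "increases rs l c" using cls_exists by force
      then show "l \<in> (\<Union>c\<in>cls. J c)" using \<open>l \<in> {1..m}\<close> by (auto simp: J_def)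
    qed
  qed
  have disj: "\<forall>c\<in>cls. \<forall>c'\<in>cls. c \<noteq> c' \<longrightarrow> J c \<inter> J c' = {}"
    using cls_unique by (fastforce simp: J_def)
  have "card (\<Union>c\<in>cls. J c) = (\<Sum>c\<in>cls. card (J c))"
    by (rule card_UN_disjoint) (use J_fin disj in \<open>auto simp: cls_def\<close>)
  then show ?thesis using U by simp
qed

lemma card_J_ge2: "c \<in> cls \<Longrightarrow> card (J c) \<ge> 2"
proof (rule ccontr)
  assume c: "c \<in> cls" and "\<not> card (J c) \<ge> 2"
  then have "card (J c) = 0 \<or> card (J c) = 1" by linarith
  then show False
  proof
    assume "card (J c) = 0"
    then have "J c = {}" using J_fin by simp
    then show False using total[OF c] Npos by simp
  next
    assume "card (J c) = 1"
    then obtain l where l: "J c = {l}" by (auto simp: card_Suc_eq)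
    then have "d l = int n" using total[OF c] by simp
    moreover have "1 \<le> l" "l \<le> m" using J_sub[of c] unfolding l by auto
    ultimately show False using d_mod by fastforce
  qed
qed

lemma card_J: "c \<in> cls \<Longrightarrow> card (J c) = 2"
proof -
  assume c: "c \<in> cls"
  have "(\<Sum>c\<in>cls. (2::nat)) = (\<Sum>c\<in>cls. card (J c))"
    using sum_card card_cls n2 by (simp add: m_def)
  then show ?thesis
    using sum_mono_inv[of "\<lambda>_. 2::nat" cls "\<lambda>c. card (J c)" c] card_J_ge2 c
    by (simp add: cls_def)
qed

definition "P1 c = Min (J c)"
definition "P2 c = Max (J c)"

lemma cls_J:
  assumes c: "c \<in> cls"
  shows "J c = {P1 c, P2 c}" "1 \<le> P1 c" "P1 c < P2 c" "P2 c \<le> m"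
proof -
  obtain x y where xy: "J c = {x, y}" "x \<noteq> y" using card_J[OF c] by (auto simp: card_2_iff)
  define p q where "p = min x y" and "q = max x y"
  have Jpq: "J c = {p, q}" "p < q" using xy by (auto simp: p_def q_def min_def max_def)
  have "P1 c = p" "P2 c = q" using Jpq by (auto simp: P1_def P2_def)
  moreover have "1 \<le> p" "q \<le> m" using J_sub[of c] unfolding Jpq(1) by auto
  ultimately show "J c = {P1 c, P2 c}" "1 \<le> P1 c" "P1 c < P2 c" "P2 c \<le> m" using Jpq by auto
qed

lemma inJ: "c \<in> cls \<Longrightarrow> 1 \<le> l \<Longrightarrow> l \<le> m \<Longrightarrow> increases rs l c \<longleftrightarrow> l = P1 c \<or> l = P2 c"
  using cls_J[of c] by (auto simp: J_def)

lemma wval: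
  assumes c: "c \<in> cls" and j: "j \<le> m"
  shows "w j c = c + (if j < P1 c then d (P1 c) else 0) + (if j < P2 c then d (P2 c) else 0)"
proof -
  note cj = cls_J[OF c]
  have "S c j = (\<Sum>l\<in>{j<..m}. (if l = P1 c then d l else 0) + (if l = P2 c then d l else 0))"
    unfolding S_def
  proof (rule sum.cong)
    fix l assume "l \<in> {j<..m}"
    then have "1 \<le> l" "l \<le> m" by auto
    then show "(if increases rs l c then d l else 0) = (if l = P1 c then d l else 0) + (if l = P2 c then d l else 0)"
      using inJ[OF c] cj(3) by auto
  qed simp
  also have "\<dots> = (if j < P1 c then d (P1 c) else 0) + (if j < P2 c then d (P2 c) else 0)"
    using cj by (simp add: sum.distrib)
  finally show ?thesis using wsum[OF cls_mod0[OF c] j] by simp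
qed

lemma dsum: "c \<in> cls \<Longrightarrow> d (P1 c) + d (P2 c) = int n"
  using total[of c] cls_J[of c] by simp

end


context TL begin

lemma cls_J1: "c \<in> cls \<Longrightarrow> 1 \<le> P1 c \<and> P1 c \<le> m \<and> 1 \<le> P2 c \<and> P2 c \<le> m"
  using cls_J[of c] by auto

lemma res1: assumes c: "c \<in> cls" shows "a (P2 c - 1) mod int n = c mod int n"
proof -
  note cj = cls_J[OF c]
  have "increases rs (P2 c) c" using inJ[OF c] cj by simp
  then have "w (P2 c) c mod int n = a (P2 c - 1) mod int n" using inc_iff[OF cls_mod0[OF c]] cj by simp
  moreover have "w (P2 c) c = c" using wval[OF c, of "P2 c"] cj by simp
  ultimately show ?thesis by simp
qed

lemma res2: assumes c: "c \<in> cls" shows "a (P1 c - 1) mod int n = (c + d (P2 c)) mod int n"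
proof -
  note cj = cls_J[OF c]
  have "increases rs (P1 c) c" using inJ[OF c] cj by simp
  then have "w (P1 c) c mod int n = a (P1 c - 1) mod int n" using inc_iff[OF cls_mod0[OF c]] cj by simp
  moreover have "w (P1 c) c = c + d (P2 c)" using wval[OF c, of "P1 c"] cj by simp
  ultimately show ?thesis by simp
qed

lemma res3: assumes c: "c \<in> cls" shows "a (P2 c) mod int n = (c + d (P2 c)) mod int n"
  by (rule mod_cong_diff[OF _ res1[OF c]]) (simp add: d_def)

lemma res4: assumes c: "c \<in> cls" shows "a (P1 c) mod int n = c mod int n"
  by (rule mod_cong_diffN[OF _ res2[OF c], of _ _ 1]) (use dsum[OF c] in \<open>simp add: d_def algebra_simps\<close>)

lemma res23: assumes c: "c \<in> cls" shows "a (P1 c - 1) mod int n = a (P2 c) mod int n"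
  using res2[OF c] res3[OF c] by simp

lemma outside:
  assumes c: "c \<in> cls" and l: "1 \<le> l" "l \<le> m" "l < P1 c \<or> P2 c < l"
  shows "a (l - 1) mod int n \<noteq> c mod int n \<and> a l mod int n \<noteq> c mod int n"
proof -
  note cj = cls_J[OF c]
  have ni: "\<not> increases rs l c" using inJ[OF c l(1,2)] l(3) cj by auto
  have wl: "w l c mod int n = c mod int n"
  proof (cases "l < P1 c")
    case True
    then have "w l c = c + d (P1 c) + d (P2 c)" using wval[OF c l(2)] cj by simp
    then have "w l c = c + 1 * int n" using dsum[OF c] by simp
    then show ?thesis by (metis mod_mult_self1)
  next
    case False
    then show ?thesis using wval[OF c l(2)] l(3) cj by simp
  qed
  show ?thesis using ni inc_iff[OF cls_mod0[OF c] l(1,2)] nocatch[OF cls_mod0[OF c] l(2)] wl by simp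
qed

lemma middle:
  assumes c: "c \<in> cls" and l: "1 \<le> l" "l \<le> m" "P1 c < l" "l < P2 c"
  shows "a (l - 1) mod int n \<noteq> a (P2 c) mod int n \<and> a l mod int n \<noteq> a (P2 c) mod int n"
proof -
  note cj = cls_J[OF c]
  have ni: "\<not> increases rs l c" using inJ[OF c l(1,2)] l(3,4) by auto
  have "w l c = c + d (P2 c)" using wval[OF c l(2)] l(3,4) by simp
  then have wl: "w l c mod int n = a (P2 c) mod int n" using res3[OF c] by simp
  show ?thesis using ni inc_iff[OF cls_mod0[OF c] l(1,2)] nocatch[OF cls_mod0[OF c] l(2)] wl by simp
qed

lemma pairA: assumes c: "c \<in> cls"
  shows "rs ! (P1 c - 1) = aff_refl n (a (P2 c) - int n) (a (P2 c - 1))"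
proof -
  note cj = cls_J[OF c]
  have s: "rs ! (P1 c - 1) = aff_refl n (a (P1 c - 1)) (a (P1 c))" using step(3)[of "P1 c"] cj by simp
  have dv: "int n dvd (a (P1 c - 1) - a (P2 c))" using modD[OF res23[OF c]] .
  have "int n dvd (a (P1 c - 1) - a (P2 c) + int n)" using dv by simp
  then have dv2: "int n dvd (a (P1 c - 1) - (a (P2 c) - int n))" by (simp add: algebra_simps)
  have e: "a (P1 c) - a (P1 c - 1) = a (P2 c - 1) - (a (P2 c) - int n)"
    using dsum[OF c] by (simp add: d_def)
  show ?thesis using s aff_refl_shift2[OF dv2 e] by simp
qed

lemma pairB: assumes c: "c \<in> cls"
  shows "rs ! (P2 c - 1) = aff_refl n (a (P1 c) - int n) (a (P1 c - 1))"
proof -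
  note cj = cls_J[OF c]
  have s: "rs ! (P2 c - 1) = aff_refl n (a (P2 c - 1)) (a (P2 c))" using step(3)[of "P2 c"] cj by simp
  have "a (P2 c - 1) mod int n = a (P1 c) mod int n" using res1[OF c] res4[OF c] by simp
  then have dv: "int n dvd (a (P2 c - 1) - a (P1 c))" using modD by blast
  have "int n dvd (a (P2 c - 1) - a (P1 c) + int n)" using dv by simp
  then have dv2: "int n dvd (a (P2 c - 1) - (a (P1 c) - int n))" by (simp add: algebra_simps)
  have e: "a (P2 c) - a (P2 c - 1) = a (P1 c - 1) - (a (P1 c) - int n)"
    using dsum[OF c] by (simp add: d_def)
  show ?thesis using s aff_refl_shift2[OF dv2 e] by simp
qed

lemma cls_of: "1 \<le> l \<Longrightarrow> l \<le> m \<Longrightarrow> \<exists>x\<in>cls. l = P1 x \<or> l = P2 x"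
  using cls_exists inJ by blast

lemma cls_of_unique:
  assumes "x \<in> cls" "y \<in> cls" "l = P1 x \<or> l = P2 x" "l = P1 y \<or> l = P2 y"
  shows "x = y"
proof -
  have l: "1 \<le> l" "l \<le> m" using assms(1,3) cls_J1 by auto
  have "increases rs l x" "increases rs l y" using inJ[OF assms(1) l] inJ[OF assms(2) l] assms(3,4) by auto
  then show ?thesis using cls_unique[OF l assms(1,2)] by simp
qed

lemma home_inj: "x \<in> cls \<Longrightarrow> y \<in> cls \<Longrightarrow> x mod int n = y mod int n \<Longrightarrow> x = y"
  using cls_mod by simp

lemma nest_aux:
  "\<forall>c. P2 c - P1 c = K \<longrightarrow> c \<in> cls \<longrightarrow> (\<forall>l x. P1 c < l \<and> l < P2 c \<and> x \<in> cls \<and> (l = P1 x \<or> l = P2 x)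
      \<longrightarrow> P1 c < P1 x \<and> P2 x < P2 c)"
proof (induction K rule: less_induct)
  case (less K)
  note OIH = less.IH
  show ?case
  proof (rule allI, rule impI, rule impI)
    fix c assume cK: "P2 c - P1 c = K" and c: "c \<in> cls"
    note cj = cls_J[OF c]
    define Q where "Q j \<longleftrightarrow> (\<forall>l x. j < l \<and> l < P2 c \<and> x \<in> cls \<and> (l = P1 x \<or> l = P2 x)
      \<longrightarrow> P1 c < P1 x \<and> P2 x < P2 c)" for j
    have main: "P1 c \<le> j \<Longrightarrow> j < P2 c \<Longrightarrow> a j mod int n = c mod int n \<Longrightarrow> Q j \<Longrightarrow> Q (P1 c)" for j
    proof (induction j rule: less_induct)
      case (less j)
      show ?case
      proof (cases "j = P1 c")
        case True then show ?thesis using less.prems by simp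
      next
        case False
        then have jj: "P1 c < j" using less.prems by simp
        have j1: "1 \<le> j" "j \<le> m" using jj less.prems(2) cj by auto
        obtain y where y: "y \<in> cls" "j = P1 y \<or> j = P2 y" using cls_of[OF j1] by blast
        note yj = cls_J[OF y(1)]
        have yc: "y \<noteq> c" using y(2) jj less.prems(2) by auto
        have jP2: "j = P2 y"
        proof (rule ccontr)
          assume "j \<noteq> P2 y"
          then have "j = P1 y" using y(2) by simp
          then have "y mod int n = c mod int n" using res4[OF y(1)] less.prems(3) by simp
          then show False using home_inj[OF y(1) c] yc by simp
        qed
        have beta: "a (P2 y) mod int n = c mod int n" using jP2 less.prems(3) by simp
        have P1lt: "P1 c < P1 y"
        proof -
          have "P1 y \<noteq> P1 c" using cls_of_unique[OF y(1) c, of "P1 c"] yc by auto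
          moreover have "\<not> P1 y < P1 c"
          proof
            assume "P1 y < P1 c"
            then have "a (P1 c) mod int n \<noteq> a (P2 y) mod int n"
              using middle[OF y(1), of "P1 c"] cj jj jP2 by auto
            then show False using res4[OF c] beta by simp
          qed
          ultimately show ?thesis by simp
        qed
        define j' where "j' = P1 y - 1"
        have j'1: "P1 c \<le> j'" "j' < j" "j' < P2 c" using P1lt yj jP2 less.prems(2) by (auto simp: j'_def)
        have j'2: "a j' mod int n = c mod int n" using res23[OF y(1)] beta by (simp add: j'_def)
        have Qj': "Q j'"
          unfolding Q_def
        proof (intro allI impI)
          fix l x assume h: "j' < l \<and> l < P2 c \<and> x \<in> cls \<and> (l = P1 x \<or> l = P2 x)"
          show "P1 c < P1 x \<and> P2 x < P2 c"
          proof (cases "j < l")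
            case True then show ?thesis using less.prems(4) h unfolding Q_def by blast
          next
            case False
            then have lj: "P1 y \<le> l" "l \<le> P2 y" using h jP2 by (auto simp: j'_def)
            show ?thesis
            proof (cases "l = P1 y \<or> l = P2 y")
              case True
              then have "x = y" using cls_of_unique[OF _ y(1), of x l] h by auto
              then show ?thesis using P1lt jP2 less.prems(2) by simp
            next
              case False
              then have lm: "P1 y < l" "l < P2 y" using lj by auto
              have "P2 y - P1 y < K" using cK P1lt jP2 less.prems(2) yj by auto
              then have "P1 y < P1 x \<and> P2 x < P2 y" using OIH[of "P2 y - P1 y"] y(1) lm h by blast
              then show ?thesis using P1lt jP2 less.prems(2) by simp
            qed
          qed
        qed
        show ?thesis using less.IH[OF j'1(2) j'1(1) j'1(3) j'2 Qj'] .
      qed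
    qed
    have "Q (P1 c)"
      by (rule main[of "P2 c - 1"]) (use cj res1[OF c] in \<open>auto simp: Q_def\<close>)
    then show "\<forall>l x. P1 c < l \<and> l < P2 c \<and> x \<in> cls \<and> (l = P1 x \<or> l = P2 x) \<longrightarrow> P1 c < P1 x \<and> P2 x < P2 c"
      unfolding Q_def by blast
  qed
qed

lemma nest:
  "c \<in> cls \<Longrightarrow> P1 c < l \<Longrightarrow> l < P2 c \<Longrightarrow> x \<in> cls \<Longrightarrow> l = P1 x \<or> l = P2 x \<Longrightarrow> P1 c < P1 x \<and> P2 x < P2 c"
  using nest_aux[of "P2 c - P1 c"] by blast

end


lemma modsubN: "(x - (N::int)) mod N = x mod N"
  using mod_cong_diffN[of "x - N" x x x "-1" N] by simp

context TL begin

lemma step_res: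
  assumes y: "y \<in> cls" and l: "l = P1 y \<or> l = P2 y"
  shows "{a (l - 1) mod int n, a l mod int n} = {y mod int n, a (P2 y) mod int n}"
  using l res1[OF y] res4[OF y] res23[OF y] by auto

lemma final:
  assumes k: "k \<in> cls"
  shows "\<exists>p1 p2 \<beta>. 1 \<le> p1 \<and> p1 < p2 \<and> p2 \<le> m
     \<and> {l \<in> {1..m}. increases rs l k} = {p1, p2}
     \<and> {a (p1 - 1) mod int n, a p1 mod int n} = {k mod int n, \<beta> mod int n}
     \<and> {a (p2 - 1) mod int n, a p2 mod int n} = {k mod int n, \<beta> mod int n}
     \<and> (\<forall>l \<in> {1..m}. (l < p1 \<or> p2 < l) \<longrightarrow>
            a (l - 1) mod int n \<noteq> k mod int n \<and> a l mod int n \<noteq> k mod int n)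
     \<and> (\<forall>l \<in> {1..m}. (p1 < l \<and> l < p2) \<longrightarrow>
            a (l - 1) mod int n \<noteq> \<beta> mod int n \<and> a l mod int n \<noteq> \<beta> mod int n)
     \<and> (\<forall>l \<in> {1..m}. (p1 < l \<and> l < p2) \<longleftrightarrow>
            (\<exists>m'. p1 < m' \<and> m' < p2 \<and> rs ! (m' - 1) = aff_refl n (a l - int n) (a (l - 1))))"
proof (intro exI conjI)
  note kj = cls_J[OF k]
  show "1 \<le> P1 k" "P1 k < P2 k" "P2 k \<le> m" using kj by auto
  show "{l \<in> {1..m}. increases rs l k} = {P1 k, P2 k}" using kj(1) by (simp add: J_def)
  show "{a (P1 k - 1) mod int n, a (P1 k) mod int n} = {k mod int n, a (P2 k) mod int n}"
    using res23[OF k] res4[OF k] by auto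
  show "{a (P2 k - 1) mod int n, a (P2 k) mod int n} = {k mod int n, a (P2 k) mod int n}"
    using res1[OF k] by auto
  show "\<forall>l \<in> {1..m}. (l < P1 k \<or> P2 k < l) \<longrightarrow>
            a (l - 1) mod int n \<noteq> k mod int n \<and> a l mod int n \<noteq> k mod int n"
    using outside[OF k] by auto
  show "\<forall>l \<in> {1..m}. (P1 k < l \<and> l < P2 k) \<longrightarrow>
            a (l - 1) mod int n \<noteq> a (P2 k) mod int n \<and> a l mod int n \<noteq> a (P2 k) mod int n"
    using middle[OF k] by auto
  show "\<forall>l \<in> {1..m}. (P1 k < l \<and> l < P2 k) \<longleftrightarrow>
            (\<exists>m'. P1 k < m' \<and> m' < P2 k \<and> rs ! (m' - 1) = aff_refl n (a l - int n) (a (l - 1)))"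
  proof (intro ballI iffI)
    fix l assume l: "l \<in> {1..m}" and h: "P1 k < l \<and> l < P2 k"
    obtain x where x: "x \<in> cls" "l = P1 x \<or> l = P2 x" using cls_of l by auto
    have nx: "P1 k < P1 x" "P2 x < P2 k" using nest[OF k _ _ x] h by auto
    have xx: "P1 x < P2 x" using cls_J[OF x(1)] by simp
    show "\<exists>m'. P1 k < m' \<and> m' < P2 k \<and> rs ! (m' - 1) = aff_refl n (a l - int n) (a (l - 1))"
      using x(2)
    proof
      assume "l = P1 x"
      then show ?thesis using pairB[OF x(1)] nx xx by (intro exI[of _ "P2 x"]) auto
    next
      assume "l = P2 x"
      then show ?thesis using pairA[OF x(1)] nx xx by (intro exI[of _ "P1 x"]) auto
    qed
  next
    fix l assume l: "l \<in> {1..m}"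
      and h: "\<exists>m'. P1 k < m' \<and> m' < P2 k \<and> rs ! (m' - 1) = aff_refl n (a l - int n) (a (l - 1))"
    then obtain m' where m': "P1 k < m'" "m' < P2 k" "rs ! (m' - 1) = aff_refl n (a l - int n) (a (l - 1))"
      by blast
    have m'1: "1 \<le> m'" "m' \<le> m" using m' kj by auto
    have l1: "1 \<le> l" "l \<le> m" using l by auto
    have "aff_refl n (a (m' - 1)) (a m') = aff_refl n (a l - int n) (a (l - 1))"
      using m'(3) step(3)[OF m'1] by simp
    moreover have "(a l - int n) mod int n \<noteq> a (l - 1) mod int n"
      using step(2)[OF l1] by (simp add: modsubN)
    ultimately have "{a (m' - 1) mod int n, a m' mod int n} = {(a l - int n) mod int n, a (l - 1) mod int n}"
      using aff_refl_res step(2)[OF m'1] by blast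
    then have R: "{a (m' - 1) mod int n, a m' mod int n} = {a (l - 1) mod int n, a l mod int n}"
      by (simp add: modsubN insert_commute)
    obtain y where y: "y \<in> cls" "l = P1 y \<or> l = P2 y" using cls_of[OF l1] by auto
    have Ry: "{a (m' - 1) mod int n, a m' mod int n} = {y mod int n, a (P2 y) mod int n}"
      using R step_res[OF y] by simp
    show "P1 k < l \<and> l < P2 k"
    proof (cases "P1 y < m' \<and> m' < P2 y")
      case True
      then have "a (m' - 1) mod int n \<noteq> a (P2 y) mod int n \<and> a m' mod int n \<noteq> a (P2 y) mod int n"
        using middle[OF y(1) m'1] by auto
      moreover have "a (P2 y) mod int n \<in> {a (m' - 1) mod int n, a m' mod int n}" using Ry by simp
      ultimately show ?thesis by auto
    next
      case False
      show ?thesis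
      proof (cases "m' = P1 y \<or> m' = P2 y")
        case True
        have "P1 k < P1 y" "P2 y < P2 k" using nest[OF k m'(1) m'(2) y(1) True] by auto
        then show ?thesis using y(2) cls_J[OF y(1)] by auto
      next
        case False2: False
        then have "m' < P1 y \<or> P2 y < m'" using False by auto
        then have "a (m' - 1) mod int n \<noteq> y mod int n \<and> a m' mod int n \<noteq> y mod int n"
          using outside[OF y(1) m'1] by auto
        moreover have "y mod int n \<in> {a (m' - 1) mod int n, a m' mod int n}" using Ry by simp
        ultimately show ?thesis by auto
      qed
    qed
  qed
qed

end

theorem corollary3p11:
  fixes n :: nat and rs :: "(int \<Rightarrow> int) list" and a :: "nat \<Rightarrow> int" and k :: int
  assumes "n \<ge> 2"
    and "rs \<in> fact_lambda n"
    and "tree_like_wit n rs a"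
    and "1 \<le> k" and "k \<le> int n - 1"
  shows "\<exists>p1 p2 \<beta>. 1 \<le> p1 \<and> p1 < p2 \<and> p2 \<le> 2 * n - 2
     \<and> {l \<in> {1..2 * n - 2}. increases rs l k} = {p1, p2}
     \<and> {a (p1 - 1) mod int n, a p1 mod int n} = {k mod int n, \<beta> mod int n}
     \<and> {a (p2 - 1) mod int n, a p2 mod int n} = {k mod int n, \<beta> mod int n}
     \<and> (\<forall>l \<in> {1..2 * n - 2}. (l < p1 \<or> p2 < l) \<longrightarrow>
            a (l - 1) mod int n \<noteq> k mod int n \<and> a l mod int n \<noteq> k mod int n)
     \<and> (\<forall>l \<in> {1..2 * n - 2}. (p1 < l \<and> l < p2) \<longrightarrow>
            a (l - 1) mod int n \<noteq> \<beta> mod int n \<and> a l mod int n \<noteq> \<beta> mod int n)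
     \<and> (\<forall>l \<in> {1..2 * n - 2}. (p1 < l \<and> l < p2) \<longleftrightarrow>
            (\<exists>m. p1 < m \<and> m < p2 \<and> rs ! (m - 1) = aff_refl n (a l - int n) (a (l - 1))))"
proof -
  interpret T: TL n rs a using assms(1-3) by unfold_locales
  have k: "k \<in> T.cls" using assms(4,5) by (simp add: T.cls_def)
  show ?thesis using T.final[OF k] unfolding T.m_def .
qed


end
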